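(* Let $\mathcal{X},\mathcal{Y}$ be finite alphabets, let $W=W_{Y|X}$ be a channel from $\mathcal{X}$ to $\mathcal{Y}$, and let $\rho\in[1,\infty]$. For $P_0,P_1\in\Delta(\mathcal{X})$ let $Q_i(y)=\sum_{x}P_i(x)W(y|x)$. Then the SDPI coefficient $$\eta_\rho(W)=\sup_{P_0,P_1\in\Delta(\mathcal{X})}\frac{D_\rho(Q_0\|Q_1)}{D_\rho(P_0\|P_1)}$$ is achieved by binary input distributions, i.e., the supremum is unchanged when restricted to pairs $(P_0,P_1)$ supported on a common set of at most two elements of $\mathcal{X}$.
   Context: $\Delta(\mathcal{X})$ is the probability simplex on $\mathcal{X}$. Rényi divergence of order $\rho$: $D_\rho(P\|Q)=\frac{1}{\rho-1}\log\sum_x P(x)^\rho Q(x)^{1-\rho}$, with $D_1=D_{\mathrm{KL}}$ (limit $\rho\to1$) and $D_\infty(P\|Q)=\log\max_x \frac{P(x)}{Q(x)}$. *)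

theory Defs
  imports "HOL-Analysis.Analysis"
begin

definition is_dist :: "('a::finite \<Rightarrow> real) \<Rightarrow> bool" where
  "is_dist P \<longleftrightarrow> (\<forall>x. P x \<ge> 0) \<and> (\<Sum>x\<in>UNIV. P x) = 1"

text \<open>A channel W from 'x to 'y; W x y stands for W(y|x).\<close>
definition is_channel :: "('x::finite \<Rightarrow> 'y::finite \<Rightarrow> real) \<Rightarrow> bool" where
  "is_channel W \<longleftrightarrow> (\<forall>x. is_dist (W x))"

definition out_dist :: "('x::finite \<Rightarrow> 'y::finite \<Rightarrow> real) \<Rightarrow> ('x \<Rightarrow> real) \<Rightarrow> 'y \<Rightarrow> real" where
  "out_dist W P y = (\<Sum>x\<in>UNIV. P x * W x y)"

definition supp :: "('a \<Rightarrow> real) \<Rightarrow> 'a set" where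
  "supp P = {x. P x \<noteq> 0}"

definition renyi_div :: "ereal \<Rightarrow> ('a::finite \<Rightarrow> real) \<Rightarrow> ('a \<Rightarrow> real) \<Rightarrow> ereal" where
  "renyi_div \<rho> P Q =
     (if \<not> supp P \<subseteq> supp Q then \<infinity>
      else if \<rho> = \<infinity> then ereal (ln (Max ((\<lambda>x. P x / Q x) ` supp P)))
      else if \<rho> = 1 then ereal (\<Sum>x\<in>supp P. P x * ln (P x / Q x))
      else ereal (1 / (real_of_ereal \<rho> - 1) *
             ln (\<Sum>x\<in>supp P. P x powr real_of_ereal \<rho> * Q x powr (1 - real_of_ereal \<rho>))))"

definition admissible_pair :: "ereal \<Rightarrow> ('x::finite \<Rightarrow> real) \<Rightarrow> ('x \<Rightarrow> real) \<Rightarrow> bool" where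
  "admissible_pair \<rho> P0 P1 \<longleftrightarrow> is_dist P0 \<and> is_dist P1 \<and>
      0 < renyi_div \<rho> P0 P1 \<and> renyi_div \<rho> P0 P1 < \<infinity>"

definition div_ratio :: "ereal \<Rightarrow> ('x::finite \<Rightarrow> 'y::finite \<Rightarrow> real) \<Rightarrow> ('x \<Rightarrow> real) \<Rightarrow> ('x \<Rightarrow> real) \<Rightarrow> ereal" where
  "div_ratio \<rho> W P0 P1 =
     renyi_div \<rho> (out_dist W P0) (out_dist W P1) / renyi_div \<rho> P0 P1"

definition sdpi_coeff :: "ereal \<Rightarrow> ('x::finite \<Rightarrow> 'y::finite \<Rightarrow> real) \<Rightarrow> ereal" where
  "sdpi_coeff \<rho> W = (SUP (P0, P1) \<in> {(P0, P1). admissible_pair \<rho> P0 P1}. div_ratio \<rho> W P0 P1)"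

end

theory Submission
  imports Defs
begin


definition hp :: "(real \<Rightarrow> real) \<Rightarrow> real \<Rightarrow> real \<Rightarrow> real" where
  "hp f a b = (if b = 0 then 0 else b * f (a / b))"

lemma hp_zero[simp]: "hp f a 0 = 0" by (simp add: hp_def)

lemma hp_hom:
  assumes "(c::real) \<ge> 0" shows "hp f (c*a) (c*b) = c * hp f a b"
  using assms by (auto simp: hp_def)

lemma hp_hom':
  assumes "(c::real) \<ge> 0" shows "hp f (a*c) (b*c) = c * hp f a b"
  using hp_hom[OF assms, of f a b] by (simp add: mult.commute)

lemma hp_sub:
  assumes f: "convex_on {0..} f" and "a \<ge> 0" "b \<ge> 0" "a' \<ge> 0" "b' \<ge> 0"
    "b = 0 \<Longrightarrow> a = 0" "b' = 0 \<Longrightarrow> a' = 0"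
  shows "hp f (a+a') (b+b') \<le> hp f a b + hp f a' b'"
proof (cases "b = 0 \<or> b' = 0")
  case True then show ?thesis using assms by (auto simp: hp_def)
next
  case False
  then have bp: "b > 0" "b' > 0" using assms by auto
  define u where "u = b/(b+b')"
  define v where "v = b'/(b+b')"
  have uv: "u \<ge> 0" "v \<ge> 0" "u + v = 1" using bp by (auto simp: u_def v_def add_divide_distrib[symmetric])
  have bb: "b+b' \<noteq> 0" using bp by simp
  have x: "a/b \<in> {0..}" "a'/b' \<in> {0..}" using assms by auto
  have "f (u *\<^sub>R (a/b) + v *\<^sub>R (a'/b')) \<le> u * f (a/b) + v * f (a'/b')"
    using f x uv unfolding convex_on_def by blast
  moreover have "u *\<^sub>R (a/b) + v *\<^sub>R (a'/b') = (a+a')/(b+b')"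
  proof -
    have "u *\<^sub>R (a/b) = a/(b+b')" "v *\<^sub>R (a'/b') = a'/(b+b')" using bp by (auto simp: u_def v_def)
    then show ?thesis by (simp add: add_divide_distrib)
  qed
  ultimately have "f ((a+a')/(b+b')) \<le> u * f (a/b) + v * f (a'/b')" by simp
  then have "(b+b') * f ((a+a')/(b+b')) \<le> (b+b') * (u * f (a/b) + v * f (a'/b'))"
    using bp by (intro mult_left_mono) auto
  also have "\<dots> = b * f (a/b) + b' * f (a'/b')"
    using bb by (simp add: u_def v_def distrib_left)
  finally show ?thesis using bp by (simp add: hp_def)
qed

lemma hp_sum:
  assumes f: "convex_on {0..} f" and K: "finite K"
    and nn: "\<And>k. k \<in> K \<Longrightarrow> a k \<ge> 0 \<and> b k \<ge> 0 \<and> (b k = 0 \<longrightarrow> a k = 0)"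
  shows "hp f (\<Sum>k\<in>K. a k) (\<Sum>k\<in>K. b k) \<le> (\<Sum>k\<in>K. hp f (a k) (b k))"
  using K nn
proof (induction K rule: finite_induct)
  case empty then show ?case by simp
next
  case (insert k K)
  have ak: "a k \<ge> 0" "b k \<ge> 0" "b k = 0 \<longrightarrow> a k = 0" using insert.prems by auto
  have s: "(\<Sum>k\<in>K. a k) \<ge> 0" "(\<Sum>k\<in>K. b k) \<ge> 0"
    using insert.prems by (auto intro: sum_nonneg)
  have s0: "(\<Sum>k\<in>K. a k) = 0" if "(\<Sum>k\<in>K. b k) = 0"
  proof -
    have "\<forall>j\<in>K. b j = 0" using that insert.prems insert.hyps(1)
      by (subst sum_nonneg_eq_0_iff[symmetric]) auto
    then show ?thesis using insert.prems by (auto intro: sum.neutral)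
  qed
  have "hp f (\<Sum>k\<in>insert k K. a k) (\<Sum>k\<in>insert k K. b k)
      = hp f (a k + (\<Sum>k\<in>K. a k)) (b k + (\<Sum>k\<in>K. b k))"
    using insert.hyps by simp
  also have "\<dots> \<le> hp f (a k) (b k) + hp f (\<Sum>k\<in>K. a k) (\<Sum>k\<in>K. b k)"
    using ak s s0 by (intro hp_sub[OF f]) auto
  also have "\<dots> \<le> hp f (a k) (b k) + (\<Sum>k\<in>K. hp f (a k) (b k))"
    using insert by auto
  finally show ?case using insert.hyps by simp
qed

definition G :: "(real \<Rightarrow> real) \<Rightarrow> ('a::finite \<Rightarrow> real) \<Rightarrow> ('a \<Rightarrow> real) \<Rightarrow> real" where
  "G f P Q = (\<Sum>x\<in>UNIV. hp f (P x) (Q x))"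

lemma channel_nonneg: "is_channel W \<Longrightarrow> W x y \<ge> 0"
  by (simp add: is_channel_def is_dist_def)
lemma channel_sum: "is_channel W \<Longrightarrow> (\<Sum>y\<in>UNIV. W x y) = 1"
  by (simp add: is_channel_def is_dist_def)

lemma out_nonneg:
  assumes "is_channel W" "\<And>x. P x \<ge> 0" shows "out_dist W P y \<ge> 0"
  unfolding out_dist_def using assms channel_nonneg[OF assms(1)] by (auto intro!: sum_nonneg)

lemma out_ac:
  assumes W: "is_channel W" and P: "\<And>x. P x \<ge> 0" and Q: "\<And>x. Q x \<ge> 0"
    and ac: "supp P \<subseteq> supp Q" and z: "out_dist W Q y = 0"
  shows "out_dist W P y = 0"
proof -
  have "\<forall>x\<in>UNIV. Q x * W x y = 0"
    using z unfolding out_dist_def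
    by (subst sum_nonneg_eq_0_iff[symmetric]) (auto simp: Q channel_nonneg[OF W])
  then have "\<forall>x. P x * W x y = 0" using ac by (auto simp: supp_def)
  then show ?thesis unfolding out_dist_def by (intro sum.neutral) auto
qed

lemma out_dist_dist:
  assumes W: "is_channel W" and P: "is_dist P" shows "is_dist (out_dist W P)"
proof -
  have "(\<Sum>y\<in>UNIV. out_dist W P y) = (\<Sum>x\<in>UNIV. P x * (\<Sum>y\<in>UNIV. W x y))"
    unfolding out_dist_def by (subst sum.swap) (simp add: sum_distrib_left)
  also have "\<dots> = 1" using P by (simp add: channel_sum[OF W] is_dist_def)
  finally show ?thesis using out_nonneg[OF W] P by (auto simp: is_dist_def)
qed

lemma out_supp:
  assumes W: "is_channel W" and P: "is_dist P" and Q: "is_dist Q" and ac: "supp P \<subseteq> supp Q"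
  shows "supp (out_dist W P) \<subseteq> supp (out_dist W Q)"
  using out_ac[OF W _ _ ac] P Q by (auto simp: supp_def is_dist_def)

lemma G_dpi:
  assumes f: "convex_on {0..} f" and W: "is_channel W"
    and P: "\<And>x. P x \<ge> 0" and Q: "\<And>x. Q x \<ge> 0" and ac: "supp P \<subseteq> supp Q"
  shows "G f (out_dist W P) (out_dist W Q) \<le> G f P Q"
proof -
  have "G f (out_dist W P) (out_dist W Q) \<le> (\<Sum>y\<in>UNIV. \<Sum>x\<in>UNIV. hp f (P x * W x y) (Q x * W x y))"
    unfolding G_def out_dist_def
    using P Q ac channel_nonneg[OF W]
    by (intro sum_mono hp_sum[OF f]) (auto simp: supp_def)
  also have "\<dots> = (\<Sum>y\<in>UNIV. \<Sum>x\<in>UNIV. W x y * hp f (P x) (Q x))"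
    using channel_nonneg[OF W] by (simp add: hp_hom')
  also have "\<dots> = (\<Sum>x\<in>UNIV. hp f (P x) (Q x) * (\<Sum>y\<in>UNIV. W x y))"
    by (subst sum.swap) (simp add: sum_distrib_right mult.commute)
  also have "\<dots> = G f P Q" by (simp add: channel_sum[OF W] G_def)
  finally show ?thesis .
qed

lemma G_ge:
  assumes f: "convex_on {0..} f" and P: "is_dist P" and Q: "is_dist Q" and ac: "supp P \<subseteq> supp Q"
  shows "f 1 \<le> G f P Q"
proof -
  have "hp f (\<Sum>x\<in>UNIV. P x) (\<Sum>x\<in>UNIV. Q x) \<le> G f P Q"
    unfolding G_def using P Q ac by (intro hp_sum[OF f]) (auto simp: is_dist_def supp_def)
  then show ?thesis using P Q by (simp add: is_dist_def hp_def)
qed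



definition decomp :: "('a::finite \<Rightarrow> real) \<Rightarrow> ('a \<Rightarrow> real) \<Rightarrow> 'k set \<Rightarrow> ('k \<Rightarrow> 'a \<Rightarrow> real) \<Rightarrow> bool" where
  "decomp P Q K cf \<longleftrightarrow> finite K \<and> (\<forall>k\<in>K. \<forall>x. cf k x \<ge> 0) \<and> (\<forall>x. (\<Sum>k\<in>K. cf k x) = 1)
     \<and> (\<forall>k\<in>K. (\<Sum>x\<in>UNIV. P x * cf k x) = (\<Sum>x\<in>UNIV. Q x * cf k x))
     \<and> (\<forall>k\<in>K. \<exists>S. card S \<le> 2 \<and> (\<forall>x. cf k x \<noteq> 0 \<longrightarrow> x \<in> S))"

lemma sum_delta_mult: "(\<Sum>x\<in>UNIV. F x * (if x = a then c else 0)) = F a * (c::real)"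
  for F :: "'a::finite \<Rightarrow> real"
  by (simp add: if_distrib cong: if_cong)

lemma div4: "(a::real) + b = c + d \<Longrightarrow> a/T + b/T = c/T + d/T"
  by (metis add_divide_distrib)

lemma decomp_exists:
  fixes P Q :: "'a::finite \<Rightarrow> real"
  assumes P: "is_dist P" and Q: "is_dist Q"
  shows "\<exists>K cf. decomp P Q (K :: ('a \<times> 'a) set) cf"
proof -
  define A where "A = {x. P x > Q x}"
  define B where "B = {x. P x < Q x}"
  define C where "C = {x. P x = Q x}"
  define T where "T = (\<Sum>x\<in>A. P x - Q x)"
  define cf where "cf k x = (if fst k = snd k then (if x = fst k then 1 else 0)
     else (if x = fst k then (Q (snd k) - P (snd k)) / T else 0)
        + (if x = snd k then (P (fst k) - Q (fst k)) / T else 0))" for k :: "'a \<times> 'a" and x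
  define K where "K = A \<times> B \<union> (\<lambda>c. (c,c)) ` C"
  have T0: "T \<ge> 0" unfolding T_def A_def by (intro sum_nonneg) auto
  have TA: "T > 0" if "A \<noteq> {}" unfolding T_def using that
    by (intro sum_pos) (auto simp: A_def)
  have tot: "(\<Sum>x\<in>UNIV. P x - Q x) = 0" using P Q by (simp add: is_dist_def sum_subtractf)
  have split: "(\<Sum>x\<in>UNIV. F x) = (\<Sum>x\<in>A. F x) + (\<Sum>x\<in>B. F x) + (\<Sum>x\<in>C. F x)" for F :: "'a \<Rightarrow> real"
  proof -
    have "UNIV = A \<union> B \<union> C" by (auto simp: A_def B_def C_def)
    moreover have "A \<inter> B = {}" "(A \<union> B) \<inter> C = {}" by (auto simp: A_def B_def C_def)
    ultimately show ?thesis by (metis finite sum.union_disjoint)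
  qed
  have TB: "(\<Sum>x\<in>B. Q x - P x) = T"
  proof -
    have "(\<Sum>x\<in>C. P x - Q x) = 0" by (auto simp: C_def)
    moreover have "(\<Sum>x\<in>B. P x - Q x) = - (\<Sum>x\<in>B. Q x - P x)" by (simp add: sum_subtractf)
    ultimately show ?thesis using tot split[of "\<lambda>x. P x - Q x"] by (simp add: T_def)
  qed
  have TB': "T > 0" if "B \<noteq> {}" unfolding TB[symmetric] using that
    by (intro sum_pos) (auto simp: B_def)
  have ABd: "a \<noteq> b" if "a \<in> A" "b \<in> B" for a b using that by (auto simp: A_def B_def)
  have fin: "finite K" by simp
  have nn: "\<forall>k\<in>K. \<forall>x. cf k x \<ge> 0"
    using T0 by (auto simp: K_def cf_def A_def B_def)
  have sum1: "(\<Sum>k\<in>K. cf k x) = 1" for x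
  proof -
    have disj: "(A \<times> B) \<inter> (\<lambda>c. (c,c)) ` C = {}" by (auto simp: A_def B_def C_def)
    have s2: "(\<Sum>k\<in>(\<lambda>c. (c,c)) ` C. cf k x) = (if x \<in> C then 1 else 0)"
      by (subst sum.reindex) (auto simp: inj_on_def cf_def)
    have s1: "(\<Sum>k\<in>A \<times> B. cf k x) = (\<Sum>a\<in>A. \<Sum>b\<in>B. (if x = a then (Q b - P b) / T else 0)
        + (if x = b then (P a - Q a) / T else 0))"
      unfolding sum.cartesian_product by (intro sum.cong) (auto simp: cf_def ABd)
    also have "\<dots> = (if x \<in> A then 1 else 0) + (if x \<in> B then 1 else 0)"
    proof -
      have inner: "(\<Sum>b\<in>B. (if x = a then (Q b - P b) / T else 0) + (if x = b then (P a - Q a) / T else 0))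
          = (if x = a then 1 else 0) + (if x \<in> B then (P a - Q a) / T else 0)" if "a \<in> A" for a
      proof -
        have "T > 0" using TA that by auto
        have "(\<Sum>b\<in>B. (if x = a then (Q b - P b) / T else 0)) = (if x = a then 1 else 0)"
          using TB \<open>T > 0\<close> by (auto simp: sum_divide_distrib[symmetric])
        moreover have "(\<Sum>b\<in>B. (if x = b then (P a - Q a) / T else 0)) = (if x \<in> B then (P a - Q a) / T else 0)"
          by (simp add: sum.delta)
        ultimately show ?thesis by (simp add: sum.distrib)
      qed
      have "(\<Sum>a\<in>A. \<Sum>b\<in>B. (if x = a then (Q b - P b) / T else 0) + (if x = b then (P a - Q a) / T else 0))
         = (\<Sum>a\<in>A. (if x = a then 1 else 0) + (if x \<in> B then (P a - Q a) / T else 0))"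
        using inner by (intro sum.cong) auto
      also have "\<dots> = (if x \<in> A then 1 else 0) + (if x \<in> B then 1 else 0)"
        using TB' by (auto simp: sum.distrib sum_divide_distrib[symmetric] T_def[symmetric])
      finally show ?thesis .
    qed
    finally have "(\<Sum>k\<in>A \<times> B. cf k x) = (if x \<in> A then 1 else 0) + (if x \<in> B then 1 else 0)" .
    then show ?thesis unfolding K_def using disj s2
      by (subst sum.union_disjoint) (auto simp: A_def B_def C_def)
  qed
  have bal: "(\<Sum>x\<in>UNIV. P x * cf k x) = (\<Sum>x\<in>UNIV. Q x * cf k x)" if "k \<in> K" for k
  proof (cases "fst k = snd k")
    case True
    then have "fst k \<in> C" using that by (auto simp: K_def A_def B_def)
    then show ?thesis using True by (simp add: cf_def sum_delta_mult C_def)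
  next
    case False
    then have "cf k = (\<lambda>x. (if x = fst k then (Q (snd k) - P (snd k)) / T else 0)
        + (if x = snd k then (P (fst k) - Q (fst k)) / T else 0))" by (auto simp: cf_def)
    then show ?thesis using False
      by (simp add: distrib_left sum.distrib sum_delta_mult) (rule div4, simp add: algebra_simps)
  qed
  have card: "\<exists>S. card S \<le> 2 \<and> (\<forall>x. cf k x \<noteq> 0 \<longrightarrow> x \<in> S)" for k
  proof (intro exI conjI)
    show "card {fst k, snd k} \<le> 2" by (simp add: card_insert_if)
    show "\<forall>x. cf k x \<noteq> 0 \<longrightarrow> x \<in> {fst k, snd k}" unfolding cf_def by simp
  qed
  have "decomp P Q K cf" unfolding decomp_def using fin nn sum1 bal card by simp
  then show ?thesis by blast
qed



definition wt :: "('a::finite \<Rightarrow> real) \<Rightarrow> ('k \<Rightarrow> 'a \<Rightarrow> real) \<Rightarrow> 'k \<Rightarrow> real" where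
  "wt Q cf k = (\<Sum>x\<in>UNIV. Q x * cf k x)"

definition comp :: "('a::finite \<Rightarrow> real) \<Rightarrow> ('a \<Rightarrow> real) \<Rightarrow> ('k \<Rightarrow> 'a \<Rightarrow> real) \<Rightarrow> 'k \<Rightarrow> 'a \<Rightarrow> real" where
  "comp F Q cf k x = F x * cf k x / wt Q cf k"

locale dec =
  fixes P Q :: "'a::finite \<Rightarrow> real" and K :: "'k set" and cf
  assumes P: "is_dist P" and Q: "is_dist Q" and ac: "supp P \<subseteq> supp Q"
    and D: "decomp P Q K cf"
begin

lemma finK: "finite K" using D by (simp add: decomp_def)
lemma cf_nn: "k \<in> K \<Longrightarrow> cf k x \<ge> 0" using D by (simp add: decomp_def)
lemma cf_sum: "(\<Sum>k\<in>K. cf k x) = 1" using D by (simp add: decomp_def)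
lemma bal: "k \<in> K \<Longrightarrow> (\<Sum>x\<in>UNIV. P x * cf k x) = wt Q cf k" using D by (simp add: decomp_def wt_def)
lemma Pnn: "P x \<ge> 0" using P by (simp add: is_dist_def)
lemma Qnn: "Q x \<ge> 0" using Q by (simp add: is_dist_def)
lemma acx: "Q x = 0 \<Longrightarrow> P x = 0" using ac by (auto simp: supp_def)

lemma wt_nn: "k \<in> K \<Longrightarrow> wt Q cf k \<ge> 0"
  unfolding wt_def using Qnn cf_nn by (auto intro!: sum_nonneg)

lemma wt_sum: "(\<Sum>k\<in>K. wt Q cf k) = 1"
proof -
  have "(\<Sum>k\<in>K. wt Q cf k) = (\<Sum>x\<in>UNIV. Q x * (\<Sum>k\<in>K. cf k x))"
    unfolding wt_def by (subst sum.swap) (simp add: sum_distrib_left)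
  then show ?thesis using Q by (simp add: cf_sum is_dist_def)
qed

lemma wt0:
  assumes k: "k \<in> K" and w: "wt Q cf k = 0"
  shows "Q x * cf k x = 0" "P x * cf k x = 0"
proof -
  have "\<forall>x\<in>UNIV. Q x * cf k x = 0" using w unfolding wt_def
    by (subst sum_nonneg_eq_0_iff[symmetric]) (auto simp: Qnn cf_nn k)
  then show q: "Q x * cf k x = 0" by auto
  then show "P x * cf k x = 0" using acx by auto
qed

lemma comp_eq: "k \<in> K \<Longrightarrow> F = P \<or> F = Q \<Longrightarrow> wt Q cf k * comp F Q cf k x = F x * cf k x"
  unfolding comp_def using wt0 by (cases "wt Q cf k = 0") auto

lemma comp_sum: "F = P \<or> F = Q \<Longrightarrow> (\<Sum>k\<in>K. wt Q cf k * comp F Q cf k x) = F x"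
proof -
  assume F: "F = P \<or> F = Q"
  have "(\<Sum>k\<in>K. wt Q cf k * comp F Q cf k x) = (\<Sum>k\<in>K. F x * cf k x)"
    using comp_eq[OF _ F] by (intro sum.cong) auto
  also have "\<dots> = F x" by (simp add: sum_distrib_left[symmetric] cf_sum)
  finally show ?thesis .
qed

lemma comp_nn: "k \<in> K \<Longrightarrow> F = P \<or> F = Q \<Longrightarrow> comp F Q cf k x \<ge> 0"
  unfolding comp_def using wt_nn Pnn Qnn cf_nn by (auto intro!: divide_nonneg_nonneg)

lemma comp_ac: "k \<in> K \<Longrightarrow> supp (comp P Q cf k) \<subseteq> supp (comp Q Q cf k)"
  unfolding comp_def supp_def using acx by auto

lemma comp_dist:
  assumes k: "k \<in> K" and w: "wt Q cf k > 0" and F: "F = P \<or> F = Q"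
  shows "is_dist (comp F Q cf k)"
proof -
  have "(\<Sum>x\<in>UNIV. comp F Q cf k x) = (\<Sum>x\<in>UNIV. F x * cf k x) / wt Q cf k"
    unfolding comp_def by (simp add: sum_divide_distrib)
  also have "\<dots> = 1" using F bal[OF k] w by (auto simp: wt_def)
  finally show ?thesis using comp_nn[OF k F] by (simp add: is_dist_def)
qed

lemma comp_bin:
  assumes k: "k \<in> K"
  shows "\<exists>S. card S \<le> 2 \<and> supp (comp P Q cf k) \<subseteq> S \<and> supp (comp Q Q cf k) \<subseteq> S"
proof -
  obtain S where S: "card S \<le> 2" "\<forall>x. cf k x \<noteq> 0 \<longrightarrow> x \<in> S" using D k by (auto simp: decomp_def)
  then show ?thesis by (intro exI[of _ S]) (auto simp: supp_def comp_def)
qed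

lemma G_in: "G f P Q = (\<Sum>k\<in>K. wt Q cf k * G f (comp P Q cf k) (comp Q Q cf k))"
proof -
  have "wt Q cf k * G f (comp P Q cf k) (comp Q Q cf k) = (\<Sum>x\<in>UNIV. cf k x * hp f (P x) (Q x))"
    if k: "k \<in> K" for k
  proof -
    have "wt Q cf k * G f (comp P Q cf k) (comp Q Q cf k)
       = (\<Sum>x\<in>UNIV. hp f (wt Q cf k * comp P Q cf k x) (wt Q cf k * comp Q Q cf k x))"
      unfolding G_def using wt_nn[OF k] by (simp add: sum_distrib_left hp_hom)
    also have "\<dots> = (\<Sum>x\<in>UNIV. hp f (P x * cf k x) (Q x * cf k x))"
      using comp_eq[OF k] by simp
    also have "\<dots> = (\<Sum>x\<in>UNIV. cf k x * hp f (P x) (Q x))"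
      using cf_nn[OF k] by (simp add: hp_hom')
    finally show ?thesis .
  qed
  then have "(\<Sum>k\<in>K. wt Q cf k * G f (comp P Q cf k) (comp Q Q cf k))
      = (\<Sum>k\<in>K. \<Sum>x\<in>UNIV. cf k x * hp f (P x) (Q x))" by (intro sum.cong) auto
  also have "\<dots> = (\<Sum>x\<in>UNIV. hp f (P x) (Q x) * (\<Sum>k\<in>K. cf k x))"
    by (subst sum.swap) (simp add: sum_distrib_right mult.commute)
  also have "\<dots> = G f P Q" by (simp add: cf_sum G_def)
  finally show ?thesis ..
qed

lemma out_comp_sum: "F = P \<or> F = Q \<Longrightarrow>
   out_dist W F y = (\<Sum>k\<in>K. wt Q cf k * out_dist W (comp F Q cf k) y)"
proof -
  assume F: "F = P \<or> F = Q"
  have "out_dist W F y = (\<Sum>x\<in>UNIV. (\<Sum>k\<in>K. wt Q cf k * comp F Q cf k x) * W x y)"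
    unfolding out_dist_def using comp_sum[OF F] by simp
  also have "\<dots> = (\<Sum>k\<in>K. wt Q cf k * out_dist W (comp F Q cf k) y)"
    unfolding out_dist_def by (simp add: sum_distrib_right sum_distrib_left mult.assoc sum.swap[of _ K])
  finally show ?thesis .
qed

lemma G_out:
  assumes f: "convex_on {0..} f" and W: "is_channel W"
  shows "G f (out_dist W P) (out_dist W Q)
     \<le> (\<Sum>k\<in>K. wt Q cf k * G f (out_dist W (comp P Q cf k)) (out_dist W (comp Q Q cf k)))"
proof -
  have "G f (out_dist W P) (out_dist W Q) \<le> (\<Sum>y\<in>UNIV. \<Sum>k\<in>K.
      hp f (wt Q cf k * out_dist W (comp P Q cf k) y) (wt Q cf k * out_dist W (comp Q Q cf k) y))"
    unfolding G_def
  proof (intro sum_mono, subst (1 2) out_comp_sum, simp, simp, rule hp_sum[OF f finK])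
    fix y k assume k: "k \<in> K"
    have nP: "comp P Q cf k x \<ge> 0" "comp Q Q cf k x \<ge> 0" for x using comp_nn[OF k] by auto
    have "out_dist W (comp P Q cf k) y = 0" if "out_dist W (comp Q Q cf k) y = 0"
      using out_ac[OF W _ _ comp_ac[OF k] that] nP by auto
    then show "0 \<le> wt Q cf k * out_dist W (comp P Q cf k) y \<and> 0 \<le> wt Q cf k * out_dist W (comp Q Q cf k) y \<and>
         (wt Q cf k * out_dist W (comp Q Q cf k) y = 0 \<longrightarrow> wt Q cf k * out_dist W (comp P Q cf k) y = 0)"
      using wt_nn[OF k] out_nonneg[OF W] nP by auto
  qed
  also have "\<dots> = (\<Sum>y\<in>UNIV. \<Sum>k\<in>K. wt Q cf k * hp f (out_dist W (comp P Q cf k) y) (out_dist W (comp Q Q cf k) y))"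
    using wt_nn by (intro sum.cong refl) (simp add: hp_hom)
  also have "\<dots> = (\<Sum>k\<in>K. wt Q cf k * G f (out_dist W (comp P Q cf k)) (out_dist W (comp Q Q cf k)))"
    unfolding G_def by (subst sum.swap) (simp add: sum_distrib_left)
  finally show ?thesis .
qed

end



lemma convex0:
  fixes f :: "real \<Rightarrow> real"
  assumes c: "convex_on {0<..} f" and f0: "f 0 = 0"
    and sc: "\<And>v y. 0 \<le> v \<Longrightarrow> v \<le> 1 \<Longrightarrow> 0 < y \<Longrightarrow> f (v * y) \<le> v * f y"
  shows "convex_on {0..} f"
proof (rule convex_onI)
  show "convex {0::real..}" by (simp add: convex_real_interval)
next
  fix t x y :: real assume t: "0 < t" "t < 1" and x: "x \<in> {0..}" and y: "y \<in> {0..}"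
  show "f ((1 - t) *\<^sub>R x + t *\<^sub>R y) \<le> (1 - t) * f x + t * f y"
  proof (cases "x = 0 \<or> y = 0")
    case True
    then show ?thesis
    proof
      assume "x = 0"
      then show ?thesis using sc[of t y] t y f0 by (cases "y = 0") auto
    next
      assume "y = 0"
      then show ?thesis using sc[of "1-t" x] t x f0 by (cases "x = 0") auto
    qed
  next
    case False
    then have "x \<in> {0<..}" "y \<in> {0<..}" using x y by auto
    then show ?thesis using convex_onD[OF c, of t x y] t by auto
  qed
qed

lemma convex_xlnx: "convex_on {0..} (\<lambda>t::real. t * ln t)"
proof (rule convex0)
  show "convex_on {0<..} (\<lambda>t::real. t * ln t)"
    by (rule f''_ge0_imp_convex[where f'="\<lambda>x. ln x + 1" and f''="\<lambda>x. 1/x"]; (rule derivative_eq_intros refl | simp)+)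
next
  fix v y :: real assume v: "0 \<le> v" "v \<le> 1" and y: "0 < y"
  show "v * y * ln (v * y) \<le> v * (y * ln y)"
  proof (cases "v = 0")
    case False
    then have "ln (v * y) = ln v + ln y" using v y by (simp add: ln_mult)
    moreover have "ln v \<le> 0" using v False by simp
    ultimately show ?thesis using v y by (simp add: algebra_simps mult_nonneg_nonpos)
  qed simp
qed simp

lemma convex_powr: assumes r: "r \<ge> 1" shows "convex_on {0..} (\<lambda>t::real. t powr r)"
proof (rule convex0)
  show "convex_on {0<..} (\<lambda>t::real. t powr r)" using powr_convex[OF r] .
next
  fix v y :: real assume v: "0 \<le> v" "v \<le> 1" and y: "0 < y"
  have "v powr r \<le> v powr 1" using v r by (intro powr_mono') auto
  then have "v powr r \<le> v" using v by simp
  then have "v powr r * y powr r \<le> v * y powr r" by (intro mult_right_mono) auto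
  then show "(v * y) powr r \<le> v * y powr r" using v y by (simp add: powr_mult)
qed simp

lemma concave_powr: assumes c: "0 \<le> c" "c \<le> 1" shows "concave_on {0<..} (\<lambda>t::real. t powr c)"
proof (rule f''_le0_imp_concave[where f'="\<lambda>x. c * x powr (c - 1)" and f''="\<lambda>x. c * ((c - 1) * x powr (c - 1 - 1))"])
  show "convex {0::real<..}" by (simp add: convex_real_interval)
  fix x :: real assume x: "x \<in> {0<..}"
  show "((\<lambda>t. t powr c) has_real_derivative c * x powr (c - 1)) (at x)"
    using x by (auto intro!: derivative_eq_intros)
  show "((\<lambda>x. c * x powr (c - 1)) has_real_derivative c * ((c - 1) * x powr (c - 1 - 1))) (at x)"
    using x by (auto intro!: derivative_eq_intros)
  show "c * ((c - 1) * x powr (c - 1 - 1)) \<le> 0"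
  proof -
    have "(c - 1) * x powr (c - 1 - 1) \<le> 0" using x c by (intro mult_nonpos_nonneg) auto
    then show ?thesis by (rule mult_nonneg_nonpos[OF c(1)])
  qed
qed


definition MX :: "('a::finite \<Rightarrow> real) \<Rightarrow> ('a \<Rightarrow> real) \<Rightarrow> real" where
  "MX P Q = Max ((\<lambda>x. P x / Q x) ` supp P)"

definition DR :: "ereal \<Rightarrow> ('a::finite \<Rightarrow> real) \<Rightarrow> ('a \<Rightarrow> real) \<Rightarrow> real" where
  "DR \<rho> P Q = (if \<rho> = \<infinity> then ln (MX P Q) else if \<rho> = 1 then G (\<lambda>t. t * ln t) P Q
     else 1 / (real_of_ereal \<rho> - 1) * ln (G (\<lambda>t. t powr real_of_ereal \<rho>) P Q))"

lemma supp_ne: assumes "is_dist P" shows "supp P \<noteq> {}"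
proof
  assume "supp P = {}"
  then have "\<forall>x. P x = 0" by (auto simp: supp_def)
  then have "sum P UNIV = 0" by simp
  with assms show False by (simp add: is_dist_def)
qed

lemma MX1:
  assumes P: "is_dist P" and Q: "is_dist Q" and ac: "supp P \<subseteq> supp Q"
  shows "P x \<le> MX P Q * Q x"
proof (cases "x \<in> supp P")
  case True
  then have "P x / Q x \<le> MX P Q" unfolding MX_def by (intro Max_ge) auto
  moreover have "Q x > 0" using True ac Q by (auto simp: supp_def is_dist_def less_le)
  ultimately show ?thesis by (simp add: pos_divide_le_eq)
next
  case False
  obtain z where z: "z \<in> supp P" using supp_ne[OF P] by auto
  have "P z / Q z \<le> MX P Q" unfolding MX_def using z by (intro Max_ge) auto
  moreover have "P z / Q z \<ge> 0" using P Q by (auto simp: is_dist_def)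
  ultimately have "MX P Q \<ge> 0" by linarith
  then show ?thesis using False Q by (auto simp: supp_def is_dist_def)
qed

lemma MX2:
  assumes P: "is_dist P" and Q: "is_dist Q" and ac: "supp P \<subseteq> supp Q"
    and R: "\<And>x. P x \<le> R * Q x"
  shows "MX P Q \<le> R"
  unfolding MX_def
proof (rule Max.boundedI)
  show "finite ((\<lambda>x. P x / Q x) ` supp P)" by simp
  show "(\<lambda>x. P x / Q x) ` supp P \<noteq> {}" using supp_ne[OF P] by simp
  fix a assume "a \<in> (\<lambda>x. P x / Q x) ` supp P"
  then obtain x where x: "x \<in> supp P" "a = P x / Q x" by auto
  have "Q x > 0" using x ac Q by (auto simp: supp_def is_dist_def less_le)
  then show "a \<le> R" using x R[of x] by (simp add: pos_divide_le_eq)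
qed

lemma MX_ge1:
  assumes P: "is_dist P" and Q: "is_dist Q" and ac: "supp P \<subseteq> supp Q"
  shows "MX P Q \<ge> 1"
proof -
  have "(\<Sum>x\<in>UNIV. P x) \<le> (\<Sum>x\<in>UNIV. MX P Q * Q x)" by (intro sum_mono MX1[OF assms])
  then show ?thesis using P Q by (simp add: is_dist_def sum_distrib_left[symmetric])
qed

lemma sum_supp_eq:
  assumes f0: "f 0 = 0" and g: "\<And>x. x \<in> supp P \<Longrightarrow> hp f (P x) (Q x) = g x" 
  shows "G f P Q = (\<Sum>x\<in>supp P. g x)"
proof -
  have "G f P Q = (\<Sum>x\<in>supp P. hp f (P x) (Q x))"
    unfolding G_def by (rule sum.mono_neutral_right) (auto simp: supp_def hp_def f0)
  also have "\<dots> = (\<Sum>x\<in>supp P. g x)" using g by simp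
  finally show ?thesis .
qed

lemma renyi_eq:
  assumes P: "is_dist P" and Q: "is_dist Q" and ac: "supp P \<subseteq> supp Q"
  shows "renyi_div \<rho> P Q = ereal (DR \<rho> P Q)"
proof -
  have Qp: "Q x > 0" if "x \<in> supp P" for x using that ac Q by (auto simp: supp_def is_dist_def less_le)
  have kl: "G (\<lambda>t. t * ln t) P Q = (\<Sum>x\<in>supp P. P x * ln (P x / Q x))"
    by (rule sum_supp_eq) (auto simp: hp_def dest: Qp)
  have rn: "G (\<lambda>t. t powr r) P Q = (\<Sum>x\<in>supp P. P x powr r * Q x powr (1 - r))" for r
  proof (rule sum_supp_eq)
    fix x assume x: "x \<in> supp P"
    have "P x \<ge> 0" using P by (simp add: is_dist_def)
    then show "hp (\<lambda>t. t powr r) (P x) (Q x) = P x powr r * Q x powr (1 - r)"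
      using Qp[OF x] by (simp add: hp_def powr_divide powr_diff)
  qed simp
  show ?thesis unfolding renyi_div_def DR_def MX_def using ac kl rn by simp
qed

lemma DR_nonneg:
  assumes P: "is_dist P" and Q: "is_dist Q" and ac: "supp P \<subseteq> supp Q" and \<rho>: "1 \<le> \<rho>"
  shows "DR \<rho> P Q \<ge> 0"
proof -
  consider "\<rho> = \<infinity>" | "\<rho> = 1" | "\<rho> \<noteq> \<infinity> \<and> \<rho> \<noteq> 1" by blast
  then show ?thesis
  proof cases
    case 1 then show ?thesis using MX_ge1[OF assms(1-3)] by (simp add: DR_def)
  next
    case 2 then show ?thesis using G_ge[OF convex_xlnx assms(1-3)] by (simp add: DR_def)
  next
    case 3
    then have r: "real_of_ereal \<rho> > 1" using \<rho> by (cases \<rho>) auto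
    have "G (\<lambda>t. t powr real_of_ereal \<rho>) P Q \<ge> 1"
      using G_ge[OF convex_powr assms(1-3)] r by simp
    then show ?thesis using 3 r by (simp add: DR_def)
  qed
qed

lemma DR_dpi:
  assumes W: "is_channel W" and P: "is_dist P" and Q: "is_dist Q" and ac: "supp P \<subseteq> supp Q" and \<rho>: "1 \<le> \<rho>"
  shows "DR \<rho> (out_dist W P) (out_dist W Q) \<le> DR \<rho> P Q"
proof -
  have oP: "is_dist (out_dist W P)" and oQ: "is_dist (out_dist W Q)" using out_dist_dist W P Q by auto
  have oac: "supp (out_dist W P) \<subseteq> supp (out_dist W Q)" using out_supp[OF W P Q ac] .
  have Pn: "\<And>x. P x \<ge> 0" and Qn: "\<And>x. Q x \<ge> 0" using P Q by (auto simp: is_dist_def)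
  consider "\<rho> = \<infinity>" | "\<rho> = 1" | "\<rho> \<noteq> \<infinity> \<and> \<rho> \<noteq> 1" by blast
  then show ?thesis
  proof cases
    case 1
    have "MX (out_dist W P) (out_dist W Q) \<le> MX P Q"
    proof (rule MX2[OF oP oQ oac])
      fix y
      have "out_dist W P y \<le> (\<Sum>x\<in>UNIV. (MX P Q * Q x) * W x y)"
        unfolding out_dist_def using MX1[OF P Q ac] channel_nonneg[OF W]
        by (intro sum_mono mult_right_mono) auto
      then show "out_dist W P y \<le> MX P Q * out_dist W Q y"
        by (simp add: out_dist_def sum_distrib_left mult.assoc)
    qed
    then show ?thesis using 1 MX_ge1[OF oP oQ oac] by (simp add: DR_def)
  next
    case 2 then show ?thesis using G_dpi[OF convex_xlnx W Pn Qn ac] by (simp add: DR_def)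
  next
    case 3
    then have r: "real_of_ereal \<rho> > 1" using \<rho> by (cases \<rho>) auto
    have "G (\<lambda>t. t powr real_of_ereal \<rho>) (out_dist W P) (out_dist W Q) \<ge> 1"
      using G_ge[OF convex_powr oP oQ oac] r by simp
    moreover have "G (\<lambda>t. t powr real_of_ereal \<rho>) (out_dist W P) (out_dist W Q) \<le> G (\<lambda>t. t powr real_of_ereal \<rho>) P Q"
      using G_dpi[OF convex_powr W Pn Qn ac] r by simp
    ultimately have "ln (G (\<lambda>t. t powr real_of_ereal \<rho>) (out_dist W P) (out_dist W Q)) \<le> ln (G (\<lambda>t. t powr real_of_ereal \<rho>) P Q)"
      by simp
    then show ?thesis using 3 r by (simp add: DR_def divide_right_mono)
  qed
qed



definition binpair :: "('a::finite \<Rightarrow> real) \<Rightarrow> ('a \<Rightarrow> real) \<Rightarrow> bool" where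
  "binpair P' Q' \<longleftrightarrow> is_dist P' \<and> is_dist Q' \<and> supp P' \<subseteq> supp Q' \<and>
     (\<exists>S. card S \<le> 2 \<and> supp P' \<subseteq> S \<and> supp Q' \<subseteq> S)"

context dec begin

lemma comp_bp: "k \<in> K \<Longrightarrow> wt Q cf k > 0 \<Longrightarrow> binpair (comp P Q cf k) (comp Q Q cf k)"
  unfolding binpair_def using comp_dist comp_ac comp_bin by blast

lemma comp_P: "k \<in> K \<Longrightarrow> wt Q cf k > 0 \<Longrightarrow> is_dist (comp P Q cf k)"
  and comp_Q: "k \<in> K \<Longrightarrow> wt Q cf k > 0 \<Longrightarrow> is_dist (comp Q Q cf k)"
  using comp_dist by auto

lemma star:
  assumes W: "is_channel W" and \<rho>: "1 \<le> \<rho>" and c: "c \<ge> 0"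
    and bin: "\<And>P' Q'. binpair P' Q' \<Longrightarrow> DR \<rho> P' Q' > 0 \<Longrightarrow>
         DR \<rho> (out_dist W P') (out_dist W Q') \<le> c * DR \<rho> P' Q'"
    and k: "k \<in> K" and w: "wt Q cf k > 0"
  shows "DR \<rho> (out_dist W (comp P Q cf k)) (out_dist W (comp Q Q cf k)) \<le> c * DR \<rho> (comp P Q cf k) (comp Q Q cf k)"
proof (cases "DR \<rho> (comp P Q cf k) (comp Q Q cf k) > 0")
  case True then show ?thesis using bin comp_bp[OF k w] by blast
next
  case False
  have bp: "is_dist (comp P Q cf k)" "is_dist (comp Q Q cf k)" "supp (comp P Q cf k) \<subseteq> supp (comp Q Q cf k)"
    using comp_bp[OF k w] by (auto simp: binpair_def)
  have "DR \<rho> (comp P Q cf k) (comp Q Q cf k) = 0" using False DR_nonneg[OF bp \<rho>] by simp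
  then show ?thesis using DR_dpi[OF W bp \<rho>] by simp
qed

lemma wsum_mono:
  assumes "\<And>k. k \<in> K \<Longrightarrow> wt Q cf k > 0 \<Longrightarrow> f k \<le> g k"
  shows "(\<Sum>k\<in>K. wt Q cf k * f k) \<le> (\<Sum>k\<in>K. wt Q cf k * g k)"
proof (rule sum_mono)
  fix k assume k: "k \<in> K"
  show "wt Q cf k * f k \<le> wt Q cf k * g k"
    using wt_nn[OF k] assms[OF k] by (cases "wt Q cf k = 0") (auto intro: mult_left_mono)
qed

lemma core_kl:
  assumes W: "is_channel W" and c: "c \<ge> 0"
    and bin: "\<And>P' Q'. binpair P' Q' \<Longrightarrow> DR 1 P' Q' > 0 \<Longrightarrow>
         DR 1 (out_dist W P') (out_dist W Q') \<le> c * DR 1 P' Q'"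
  shows "DR 1 (out_dist W P) (out_dist W Q) \<le> c * DR 1 P Q"
proof -
  let ?f = "\<lambda>t::real. t * ln t"
  have "DR 1 (out_dist W P) (out_dist W Q) = G ?f (out_dist W P) (out_dist W Q)" by (simp add: DR_def)
  also have "\<dots> \<le> (\<Sum>k\<in>K. wt Q cf k * G ?f (out_dist W (comp P Q cf k)) (out_dist W (comp Q Q cf k)))"
    by (rule G_out[OF convex_xlnx W])
  also have "\<dots> \<le> (\<Sum>k\<in>K. wt Q cf k * (c * G ?f (comp P Q cf k) (comp Q Q cf k)))"
    using star[OF W _ c bin] by (intro wsum_mono) (simp add: DR_def)
  also have "\<dots> = c * G ?f P Q" by (simp add: G_in sum_distrib_left mult.left_commute)
  finally show ?thesis by (simp add: DR_def)
qed

lemma core_inf: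
  assumes W: "is_channel W" and c: "c \<ge> 0"
    and bin: "\<And>P' Q'. binpair P' Q' \<Longrightarrow> DR \<infinity> P' Q' > 0 \<Longrightarrow>
         DR \<infinity> (out_dist W P') (out_dist W Q') \<le> c * DR \<infinity> P' Q'"
  shows "DR \<infinity> (out_dist W P) (out_dist W Q) \<le> c * DR \<infinity> P Q"
proof -
  define M where "M = MX P Q"
  define R where "R = exp (c * ln M)"
  have M1: "M \<ge> 1" unfolding M_def by (rule MX_ge1[OF P Q ac])
  have oP: "is_dist (out_dist W P)" and oQ: "is_dist (out_dist W Q)" using out_dist_dist W P Q by auto
  have oac: "supp (out_dist W P) \<subseteq> supp (out_dist W Q)" using out_supp[OF W P Q ac] .
  have Rk: "out_dist W (comp P Q cf k) y \<le> R * out_dist W (comp Q Q cf k) y"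
    if k: "k \<in> K" and w: "wt Q cf k > 0" for k y
  proof -
    have bp: "is_dist (comp P Q cf k)" "is_dist (comp Q Q cf k)" "supp (comp P Q cf k) \<subseteq> supp (comp Q Q cf k)"
      using comp_bp[OF k w] by (auto simp: binpair_def)
    have obp: "is_dist (out_dist W (comp P Q cf k))" "is_dist (out_dist W (comp Q Q cf k))"
      "supp (out_dist W (comp P Q cf k)) \<subseteq> supp (out_dist W (comp Q Q cf k))"
      using out_dist_dist[OF W] out_supp[OF W bp] bp by auto
    have "MX (comp P Q cf k) (comp Q Q cf k) \<le> M"
    proof (rule MX2[OF bp])
      fix x
      have "P x * cf k x \<le> (M * Q x) * cf k x"
        using MX1[OF P Q ac, of x] cf_nn[OF k] by (intro mult_right_mono) (auto simp: M_def)
      then have "P x * cf k x / wt Q cf k \<le> (M * Q x) * cf k x / wt Q cf k"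
        using w by (intro divide_right_mono) auto
      then show "comp P Q cf k x \<le> M * comp Q Q cf k x" by (simp add: comp_def mult.assoc)
    qed
    moreover have Mk1: "MX (comp P Q cf k) (comp Q Q cf k) \<ge> 1" by (rule MX_ge1[OF bp])
    ultimately have "ln (MX (comp P Q cf k) (comp Q Q cf k)) \<le> ln M" by simp
    moreover have "ln (MX (out_dist W (comp P Q cf k)) (out_dist W (comp Q Q cf k)))
        \<le> c * ln (MX (comp P Q cf k) (comp Q Q cf k))"
      using star[OF W _ c bin k w] by (simp add: DR_def)
    ultimately have "ln (MX (out_dist W (comp P Q cf k)) (out_dist W (comp Q Q cf k))) \<le> c * ln M"
      using c by (meson mult_left_mono order_trans)
    moreover have Mo1: "MX (out_dist W (comp P Q cf k)) (out_dist W (comp Q Q cf k)) \<ge> 1" by (rule MX_ge1[OF obp])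
    ultimately have MoR: "MX (out_dist W (comp P Q cf k)) (out_dist W (comp Q Q cf k)) \<le> R"
      unfolding R_def by (metis exp_le_cancel_iff exp_ln less_le_trans zero_less_one)
    have "out_dist W (comp P Q cf k) y \<le> MX (out_dist W (comp P Q cf k)) (out_dist W (comp Q Q cf k)) * out_dist W (comp Q Q cf k) y"
      by (rule MX1[OF obp])
    also have "\<dots> \<le> R * out_dist W (comp Q Q cf k) y"
      using MoR obp(2) by (intro mult_right_mono) (auto simp: is_dist_def)
    finally show ?thesis .
  qed
  have "MX (out_dist W P) (out_dist W Q) \<le> R"
  proof (rule MX2[OF oP oQ oac])
    fix y
    have "out_dist W P y = (\<Sum>k\<in>K. wt Q cf k * out_dist W (comp P Q cf k) y)" by (rule out_comp_sum) simp
    also have "\<dots> \<le> (\<Sum>k\<in>K. wt Q cf k * (R * out_dist W (comp Q Q cf k) y))"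
      using Rk by (intro wsum_mono) auto
    also have "\<dots> = R * out_dist W Q y"
      by (subst out_comp_sum[of Q]) (simp_all add: sum_distrib_left mult.left_commute)
    finally show "out_dist W P y \<le> R * out_dist W Q y" .
  qed
  moreover have "MX (out_dist W P) (out_dist W Q) \<ge> 1" by (rule MX_ge1[OF oP oQ oac])
  ultimately have "ln (MX (out_dist W P) (out_dist W Q)) \<le> ln R" by simp
  then show ?thesis by (simp add: R_def DR_def M_def)
qed


lemma core_r:
  assumes W: "is_channel W" and c: "c \<ge> 0" and \<rho>: "1 \<le> \<rho>" "\<rho> \<noteq> \<infinity>" "\<rho> \<noteq> 1"
    and bin: "\<And>P' Q'. binpair P' Q' \<Longrightarrow> DR \<rho> P' Q' > 0 \<Longrightarrow>
         DR \<rho> (out_dist W P') (out_dist W Q') \<le> c * DR \<rho> P' Q'"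
  shows "DR \<rho> (out_dist W P) (out_dist W Q) \<le> c * DR \<rho> P Q"
proof (cases "c \<ge> 1")
  case True
  have "DR \<rho> (out_dist W P) (out_dist W Q) \<le> DR \<rho> P Q" by (rule DR_dpi[OF W P Q ac \<rho>(1)])
  also have "\<dots> \<le> c * DR \<rho> P Q" using DR_nonneg[OF P Q ac \<rho>(1)] True
    by (metis mult_le_cancel_right1 order.strict_iff_not)
  finally show ?thesis .
next
  case False
  define r where "r = real_of_ereal \<rho>"
  have r: "r > 1" using \<rho> unfolding r_def by (cases \<rho>) auto
  let ?f = "\<lambda>t::real. t powr r"
  have DRr: "DR \<rho> X Y = 1 / (r - 1) * ln (G ?f X Y)" for X Y :: "'b::finite \<Rightarrow> real"
    using \<rho> by (simp add: DR_def r_def)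
  have cvx: "convex_on {0..} ?f" using convex_powr r by simp
  have oP: "is_dist (out_dist W P)" and oQ: "is_dist (out_dist W Q)" using out_dist_dist W P Q by auto
  have oac: "supp (out_dist W P) \<subseteq> supp (out_dist W Q)" using out_supp[OF W P Q ac] .
  have Hk1: "G ?f (comp P Q cf k) (comp Q Q cf k) \<ge> 1" if k: "k \<in> K" and w: "wt Q cf k > 0" for k
  proof -
    have bp: "is_dist (comp P Q cf k)" "is_dist (comp Q Q cf k)" "supp (comp P Q cf k) \<subseteq> supp (comp Q Q cf k)"
      using comp_bp[OF k w] by (auto simp: binpair_def)
    show ?thesis using G_ge[OF cvx bp] by simp
  qed
  have Hok: "G ?f (out_dist W (comp P Q cf k)) (out_dist W (comp Q Q cf k))
      \<le> G ?f (comp P Q cf k) (comp Q Q cf k) powr c" if k: "k \<in> K" and w: "wt Q cf k > 0" for k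
  proof -
    have bp: "is_dist (comp P Q cf k)" "is_dist (comp Q Q cf k)" "supp (comp P Q cf k) \<subseteq> supp (comp Q Q cf k)"
      using comp_bp[OF k w] by (auto simp: binpair_def)
    have obp: "is_dist (out_dist W (comp P Q cf k))" "is_dist (out_dist W (comp Q Q cf k))"
      "supp (out_dist W (comp P Q cf k)) \<subseteq> supp (out_dist W (comp Q Q cf k))"
      using out_dist_dist[OF W] out_supp[OF W bp] bp by auto
    define Ho where "Ho = G ?f (out_dist W (comp P Q cf k)) (out_dist W (comp Q Q cf k))"
    define H where "H = G ?f (comp P Q cf k) (comp Q Q cf k)"
    have Ho1: "Ho \<ge> 1" unfolding Ho_def using G_ge[OF cvx obp] by simp
    have H1: "H \<ge> 1" unfolding H_def using Hk1[OF k w] .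
    have st: "DR \<rho> (out_dist W (comp P Q cf k)) (out_dist W (comp Q Q cf k)) \<le> c * DR \<rho> (comp P Q cf k) (comp Q Q cf k)"
      using star[OF W \<rho>(1) c bin k w] by simp
    have "1 / (r - 1) * ln Ho \<le> c * (1 / (r - 1) * ln H)"
      using st \<rho> by (simp add: DR_def r_def Ho_def H_def)
    then have "ln Ho / (r - 1) \<le> (c * ln H) / (r - 1)" by simp
    then have "ln Ho \<le> c * ln H" using r by (simp add: divide_right_mono_neg divide_le_cancel)
    then have "exp (ln Ho) \<le> exp (c * ln H)" by simp
    then have "Ho \<le> exp (c * ln H)" using Ho1 by simp
    moreover have "H powr c = exp (c * ln H)" using H1 by (simp add: powr_def mult.commute)
    ultimately have "Ho \<le> H powr c" by simp
    then show ?thesis by (simp only: Ho_def H_def)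
  qed
  define K' where "K' = {k\<in>K. wt Q cf k > 0}"
  have K'sub: "K' \<subseteq> K" and finK': "finite K'" using finK by (auto simp: K'_def)
  have Ksum: "(\<Sum>k\<in>K. wt Q cf k * g k) = (\<Sum>k\<in>K'. wt Q cf k * g k)" for g
    using wt_nn finK by (intro sum.mono_neutral_right) (auto simp: K'_def less_le)
  have wK': "(\<Sum>k\<in>K'. wt Q cf k) = 1" using Ksum[of "\<lambda>_. 1"] wt_sum by simp
  then have K'ne: "K' \<noteq> {}" by auto
  have "G ?f (out_dist W P) (out_dist W Q)
      \<le> (\<Sum>k\<in>K. wt Q cf k * G ?f (out_dist W (comp P Q cf k)) (out_dist W (comp Q Q cf k)))"
    by (rule G_out[OF cvx W])
  also have "\<dots> \<le> (\<Sum>k\<in>K. wt Q cf k * G ?f (comp P Q cf k) (comp Q Q cf k) powr c)"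
    using Hok by (intro wsum_mono) auto
  also have "\<dots> = (\<Sum>k\<in>K'. wt Q cf k * G ?f (comp P Q cf k) (comp Q Q cf k) powr c)" by (rule Ksum)
  also have "\<dots> \<le> (\<Sum>k\<in>K'. wt Q cf k *\<^sub>R G ?f (comp P Q cf k) (comp Q Q cf k)) powr c"
  proof -
    have pos: "G ?f (comp P Q cf i) (comp Q Q cf i) \<in> {0<..}" if "i \<in> K'" for i
      using Hk1[of i] that by (force simp: K'_def)
    have wn: "wt Q cf i \<ge> 0" if "i \<in> K'" for i using that by (simp add: K'_def)
    have cc: "concave_on {0<..} (\<lambda>t::real. t powr c)" using c False by (intro concave_powr) auto
    show ?thesis using concave_on_sum[OF finK' K'ne cc wK' wn pos] by simp
  qed
  also have "\<dots> = G ?f P Q powr c" using Ksum G_in by simp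
  finally have le: "G ?f (out_dist W P) (out_dist W Q) \<le> G ?f P Q powr c" .
  have Ho1: "G ?f (out_dist W P) (out_dist W Q) \<ge> 1" using G_ge[OF cvx oP oQ oac] by simp
  have H1: "G ?f P Q \<ge> 1" using G_ge[OF cvx P Q ac] by simp
  have "ln (G ?f (out_dist W P) (out_dist W Q)) \<le> ln (G ?f P Q powr c)"
    using le Ho1 by (subst ln_le_cancel_iff) auto
  also have "\<dots> = c * ln (G ?f P Q)" using H1 by (simp add: ln_powr)
  finally have "ln (G ?f (out_dist W P) (out_dist W Q)) / (r - 1) \<le> c * ln (G ?f P Q) / (r - 1)"
    using r by (intro divide_right_mono) auto
  then show ?thesis using \<rho> by (simp add: DR_def r_def)
qed

lemma exist:
  assumes \<rho>: "1 \<le> \<rho>" and pos: "DR \<rho> P Q > 0"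
  shows "\<exists>k\<in>K. wt Q cf k > 0 \<and> DR \<rho> (comp P Q cf k) (comp Q Q cf k) > 0"
proof (rule ccontr)
  assume "\<not> ?thesis"
  then have nk: "\<And>k. k \<in> K \<Longrightarrow> wt Q cf k > 0 \<Longrightarrow> DR \<rho> (comp P Q cf k) (comp Q Q cf k) \<le> 0" by force
  have bpk: "is_dist (comp P Q cf k) \<and> is_dist (comp Q Q cf k) \<and> supp (comp P Q cf k) \<subseteq> supp (comp Q Q cf k)"
    if "k \<in> K" "wt Q cf k > 0" for k using comp_bp[OF that] by (auto simp: binpair_def)
  consider "\<rho> = \<infinity>" | "\<rho> = 1" | "\<rho> \<noteq> \<infinity> \<and> \<rho> \<noteq> 1" by blast
  then have "DR \<rho> P Q \<le> 0"
  proof cases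
    case 1
    have "MX P Q \<le> 1"
    proof (rule MX2[OF P Q ac])
      fix x
      have "comp P Q cf k x \<le> comp Q Q cf k x" if k: "k \<in> K" and w: "wt Q cf k > 0" for k
      proof -
        have "ln (MX (comp P Q cf k) (comp Q Q cf k)) \<le> 0" using nk[OF k w] 1 by (simp add: DR_def)
        moreover have "MX (comp P Q cf k) (comp Q Q cf k) \<ge> 1" using MX_ge1 bpk[OF k w] by blast
        ultimately have m: "MX (comp P Q cf k) (comp Q Q cf k) \<le> 1" by simp
        have "comp P Q cf k x \<le> MX (comp P Q cf k) (comp Q Q cf k) * comp Q Q cf k x"
          using MX1 bpk[OF k w] by blast
        also have "\<dots> \<le> 1 * comp Q Q cf k x" using m comp_nn[OF k, of Q x]
          by (intro mult_right_mono) auto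
        finally show ?thesis by simp
      qed
      then have "(\<Sum>k\<in>K. wt Q cf k * comp P Q cf k x) \<le> (\<Sum>k\<in>K. wt Q cf k * comp Q Q cf k x)"
        by (intro wsum_mono) auto
      then show "P x \<le> 1 * Q x" using comp_sum[of P x] comp_sum[of Q x] by simp
    qed
    moreover have "MX P Q \<ge> 1" by (rule MX_ge1[OF P Q ac])
    ultimately show ?thesis using 1 by (simp add: DR_def)
  next
    case 2
    have "G (\<lambda>t. t * ln t) P Q = (\<Sum>k\<in>K. wt Q cf k * G (\<lambda>t. t * ln t) (comp P Q cf k) (comp Q Q cf k))"
      by (rule G_in)
    also have "\<dots> \<le> (\<Sum>k\<in>K. wt Q cf k * 0)" using nk 2 by (intro wsum_mono) (simp add: DR_def)
    finally show ?thesis using 2 by (simp add: DR_def)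
  next
    case 3
    define r where "r = real_of_ereal \<rho>"
    have r: "r > 1" using \<rho> 3 unfolding r_def by (cases \<rho>) auto
    let ?f = "\<lambda>t::real. t powr r"
    have DRr: "DR \<rho> X Y = 1 / (r - 1) * ln (G ?f X Y)" for X Y :: "'a \<Rightarrow> real"
      using 3 by (simp add: DR_def r_def)
    have cvx: "convex_on {0..} ?f" using convex_powr r by simp
    have "G ?f (comp P Q cf k) (comp Q Q cf k) \<le> 1" if k: "k \<in> K" and w: "wt Q cf k > 0" for k
    proof -
      have g1: "G ?f (comp P Q cf k) (comp Q Q cf k) \<ge> 1"
        using G_ge[OF cvx, of "comp P Q cf k" "comp Q Q cf k"] bpk[OF k w] by simp
      have "1 / (r - 1) * ln (G ?f (comp P Q cf k) (comp Q Q cf k)) \<le> 0" using nk[OF k w] DRr by simp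
      then have "ln (G ?f (comp P Q cf k) (comp Q Q cf k)) \<le> 0" using r
        by (simp add: divide_le_0_iff)
      then show ?thesis using g1 by simp
    qed
    then have "(\<Sum>k\<in>K. wt Q cf k * G ?f (comp P Q cf k) (comp Q Q cf k)) \<le> (\<Sum>k\<in>K. wt Q cf k * 1)"
      by (intro wsum_mono) auto
    then have "G ?f P Q \<le> 1" using G_in wt_sum by simp
    moreover have "G ?f P Q \<ge> 1" using G_ge[OF cvx P Q ac] by simp
    ultimately show ?thesis using DRr by simp
  qed
  then show False using pos by simp
qed

end



lemma adm_iff:
  "admissible_pair \<rho> P0 P1 \<longleftrightarrow> is_dist P0 \<and> is_dist P1 \<and> supp P0 \<subseteq> supp P1 \<and> DR \<rho> P0 P1 > 0"
proof
  assume a: "admissible_pair \<rho> P0 P1"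
  then have d: "is_dist P0" "is_dist P1" by (auto simp: admissible_pair_def)
  have s: "supp P0 \<subseteq> supp P1"
  proof (rule ccontr)
    assume "\<not> ?thesis"
    then have "renyi_div \<rho> P0 P1 = \<infinity>" by (simp add: renyi_div_def)
    then show False using a by (simp add: admissible_pair_def)
  qed
  then show "is_dist P0 \<and> is_dist P1 \<and> supp P0 \<subseteq> supp P1 \<and> DR \<rho> P0 P1 > 0"
    using a d renyi_eq[OF d s] by (simp add: admissible_pair_def)
next
  assume h: "is_dist P0 \<and> is_dist P1 \<and> supp P0 \<subseteq> supp P1 \<and> DR \<rho> P0 P1 > 0"
  then have "renyi_div \<rho> P0 P1 = ereal (DR \<rho> P0 P1)" using renyi_eq by blast
  then show "admissible_pair \<rho> P0 P1" using h by (simp add: admissible_pair_def)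
qed

lemma ratio_eq:
  assumes W: "is_channel W" and "admissible_pair \<rho> P0 P1"
  shows "div_ratio \<rho> W P0 P1 = ereal (DR \<rho> (out_dist W P0) (out_dist W P1) / DR \<rho> P0 P1)"
proof -
  have a: "is_dist P0" "is_dist P1" "supp P0 \<subseteq> supp P1" "DR \<rho> P0 P1 > 0" using assms(2) adm_iff by auto
  have o: "is_dist (out_dist W P0)" "is_dist (out_dist W P1)" "supp (out_dist W P0) \<subseteq> supp (out_dist W P1)"
    using out_dist_dist[OF W] out_supp[OF W a(1-3)] a by auto
  show ?thesis unfolding div_ratio_def renyi_eq[OF a(1-3)] renyi_eq[OF o] using a(4) by simp
qed

theorem theorem4p2:
  fixes W :: "'x::finite \<Rightarrow> 'y::finite \<Rightarrow> real" and \<rho> :: ereal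
  assumes "is_channel W" and "1 \<le> \<rho>"
  shows "sdpi_coeff \<rho> W =
    (SUP (P0, P1) \<in> {(P0, P1). admissible_pair \<rho> P0 P1 \<and>
        (\<exists>S. card S \<le> 2 \<and> supp P0 \<subseteq> S \<and> supp P1 \<subseteq> S)}.
       div_ratio \<rho> W P0 P1)"
proof -
  note W = assms(1) and \<rho> = assms(2)
  define B where "B = {(P0, P1). admissible_pair \<rho> P0 P1 \<and>
        (\<exists>S. card S \<le> 2 \<and> supp P0 \<subseteq> S \<and> supp (P1 :: 'x \<Rightarrow> real) \<subseteq> S)}"
  define A where "A = {(P0, P1 :: 'x \<Rightarrow> real). admissible_pair \<rho> P0 P1}"
  define \<eta> where "\<eta> = (SUP (P0, P1) \<in> B. div_ratio \<rho> W P0 P1)"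
  have BA: "B \<subseteq> A" by (auto simp: A_def B_def)
  have inB: "(P', Q') \<in> B" if "binpair P' Q'" "DR \<rho> P' Q' > 0" for P' Q'
    using that by (auto simp: B_def binpair_def adm_iff)
  have le: "div_ratio \<rho> W P Q \<le> \<eta>" if PQ: "(P, Q) \<in> A" for P Q
  proof -
    have a: "is_dist P" "is_dist Q" "supp P \<subseteq> supp Q" "DR \<rho> P Q > 0" using PQ by (auto simp: A_def adm_iff)
    obtain K :: "('x \<times> 'x) set" and cf where D: "decomp P Q K cf" using decomp_exists[OF a(1,2)] by blast
    interpret dec P Q K cf using a D by unfold_locales auto
    obtain k where k: "k \<in> K" "wt Q cf k > 0" "DR \<rho> (comp P Q cf k) (comp Q Q cf k) > 0"
      using exist[OF \<rho> a(4)] by blast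
    have bpk: "binpair (comp P Q cf k) (comp Q Q cf k)" using comp_bp k by blast
    then have kB: "(comp P Q cf k, comp Q Q cf k) \<in> B" using inB k(3) by blast
    have "div_ratio \<rho> W (comp P Q cf k) (comp Q Q cf k) \<le> \<eta>"
      unfolding \<eta>_def using SUP_upper[OF kB, of "\<lambda>(P0, P1). div_ratio \<rho> W P0 P1"] by simp
    moreover have "div_ratio \<rho> W (comp P Q cf k) (comp Q Q cf k) \<ge> 0"
    proof -
      have bb: "is_dist (comp P Q cf k)" "is_dist (comp Q Q cf k)" "supp (comp P Q cf k) \<subseteq> supp (comp Q Q cf k)"
        using bpk by (auto simp: binpair_def)
      have "DR \<rho> (out_dist W (comp P Q cf k)) (out_dist W (comp Q Q cf k)) \<ge> 0"
        using DR_nonneg[OF out_dist_dist[OF W bb(1)] out_dist_dist[OF W bb(2)] out_supp[OF W bb] \<rho>] .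
      then show ?thesis using ratio_eq[OF W] kB k(3) by (auto simp: B_def)
    qed
    ultimately have \<eta>0: "\<eta> \<ge> 0" by simp
    show ?thesis
    proof (cases \<eta>)
      case PInf then show ?thesis by simp
    next
      case MInf then show ?thesis using \<eta>0 by simp
    next
      case (real c)
      then have c: "c \<ge> 0" using \<eta>0 by simp
      have bin: "DR \<rho> (out_dist W P') (out_dist W Q') \<le> c * DR \<rho> P' Q'"
        if "binpair P' Q'" "DR \<rho> P' Q' > 0" for P' Q'
      proof -
        have pB: "(P', Q') \<in> B" using inB that by blast
        have "div_ratio \<rho> W P' Q' \<le> \<eta>"
          unfolding \<eta>_def using SUP_upper[OF pB, of "\<lambda>(P0, P1). div_ratio \<rho> W P0 P1"] by simp
        then have "DR \<rho> (out_dist W P') (out_dist W Q') / DR \<rho> P' Q' \<le> c"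
          using ratio_eq[OF W] pB real by (auto simp: B_def)
        then show ?thesis using that(2) by (simp add: pos_divide_le_eq mult.commute)
      qed
      have main: "DR \<rho> (out_dist W P) (out_dist W Q) \<le> c * DR \<rho> P Q"
      proof -
        consider "\<rho> = \<infinity>" | "\<rho> = 1" | "\<rho> \<noteq> \<infinity> \<and> \<rho> \<noteq> 1" by blast
        then show ?thesis
        proof cases
          case 1 then show ?thesis using core_inf[OF W c] bin by blast
        next
          case 2 then show ?thesis using core_kl[OF W c] bin by blast
        next
          case 3 then show ?thesis using core_r[OF W c \<rho>] bin by blast
        qed
      qed
      then have "DR \<rho> (out_dist W P) (out_dist W Q) / DR \<rho> P Q \<le> c"
        using a(4) by (simp add: pos_divide_le_eq mult.commute)
      then show ?thesis using ratio_eq[OF W] PQ real by (auto simp: A_def)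
    qed
  qed
  have "sdpi_coeff \<rho> W = (SUP (P0, P1) \<in> A. div_ratio \<rho> W P0 P1)"
    by (simp add: sdpi_coeff_def A_def)
  also have "\<dots> = \<eta>"
  proof (rule antisym)
    show "(SUP (P0, P1) \<in> A. div_ratio \<rho> W P0 P1) \<le> \<eta>"
      using le by (intro SUP_least) auto
    show "\<eta> \<le> (SUP (P0, P1) \<in> A. div_ratio \<rho> W P0 P1)"
      unfolding \<eta>_def using BA by (rule SUP_subset_mono) simp
  qed
  finally show ?thesis by (simp add: \<eta>_def B_def)
qed

end
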